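(* Let $0<\gamma<1$, $\lambda\ge0$, $\tau>0$, $\eta\in\mathbb{R}$, $J=\sqrt{-1}$, and let $\rho,u$ be real with $\rho u\ge0$. Define $l_0^{(2)}=l_0^{2,\gamma}-\left(\sum_{l=1}^{2}\frac1l(1-e^{-\lambda\tau})^l\right)^{\gamma}$ and $l_k^{(2)}=e^{-(\lambda+\rho u)k\tau}l_k^{2,\gamma}$ for $k\ge1$. Then for every positive integer $N$ and every $(v^0,v^1,\dots,v^N)\in\mathbb{C}^{N+1}$, $$\Re\left\{\sum_{n=0}^{N}\left(\sum_{k=0}^{n}l_k^{(2)}e^{-J\eta u k\tau}v^{n-k}\right)\overline{v^n}\right\}\ge0.$$
   Context: The coefficients $l_k^{2,\gamma}$ are defined by $\left((1-\zeta)+\tfrac12(1-\zeta)^2\right)^{\gamma}=\sum_{k=0}^\infty l_k^{2,\gamma}\zeta^k$; equivalently $l_m^{2,\gamma}=(3/2)^{\gamma}\sum_{k=0}^{m}3^{-k}g_k^\gamma g_{m-k}^\gamma$ with $g_k^\gamma=(-1)^k\binom{\gamma}{k}$. (In the paper $u=U(x_i)$ is the value of a potential at a grid point.) *)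

theory Defs
  imports Complex_Main
begin

definition gcoef :: "real \<Rightarrow> nat \<Rightarrow> real" where
  "gcoef \<gamma> k = (-1) ^ k * (\<gamma> gchoose k)"

(* l_m^{2,gamma} = (3/2)^gamma * sum_{k=0}^m 3^{-k} g_k g_{m-k},
   the coefficients of ((1-z) + (1-z)^2/2)^gamma *)
definition lcoef2 :: "real \<Rightarrow> nat \<Rightarrow> real" where
  "lcoef2 \<gamma> m = (3/2) powr \<gamma> * (\<Sum>k=0..m. (1/3) ^ k * gcoef \<gamma> k * gcoef \<gamma> (m - k))"

definition lmod2 :: "real \<Rightarrow> real \<Rightarrow> real \<Rightarrow> real \<Rightarrow> real \<Rightarrow> nat \<Rightarrow> real" where
  "lmod2 \<gamma> lam \<tau> \<rho> u k =
     (if k = 0 then lcoef2 \<gamma> 0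
        - (\<Sum>l=1..(2::nat). (1 / real l) * (1 - exp (- lam * \<tau>)) ^ l) powr \<gamma>
      else exp (- (lam + \<rho> * u) * real k * \<tau>) * lcoef2 \<gamma> k)"

end

theory Submission
  imports Defs "HOL-Analysis.Analysis"
begin
lemma cos_concave_aux:
  fixes y g :: real
  assumes "0 \<le> g" "g \<le> 1" "\<bar>y\<bar> \<le> pi/2"
  shows "g * cos y + (1 - g) \<le> cos (g * y)"
proof -
  have cv: "convex_on {-pi/2..pi/2} (\<lambda>x. - cos x)"
  proof (rule convex_on_realI[where f' = sin])
    show "connected {-pi/2..pi/2::real}" by simp
    show "((\<lambda>x. - cos x) has_real_derivative sin x) (at x)" for x
      by (auto intro!: derivative_eq_intros)
    show "sin x \<le> sin y" if "x \<in> {-pi/2..pi/2}" "y \<in> {-pi/2..pi/2}" "x \<le> y" for x y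
      using that by (intro sin_monotone_2pi_le) auto
  qed
  have "- cos ((1 - g) *\<^sub>R 0 + g *\<^sub>R y) \<le> (1 - g) * (- cos 0) + g * (- cos y)"
    by (rule convex_onD[OF cv]) (use assms in auto)
  then show ?thesis by (simp add: algebra_simps)
qed

lemma cos_powr_le:
  fixes y g :: real
  assumes "0 \<le> g" "g \<le> 1" "\<bar>y\<bar> \<le> pi/2" "0 < cos y"
  shows "cos y powr g \<le> cos (g * y)"
proof -
  have "cos y powr g * 1 powr (1 - g) \<le> g * cos y + (1 - g) * 1"
    by (rule Youngs_inequality_0) (use assms in auto)
  then show ?thesis using cos_concave_aux[OF assms(1-3)] by simp
qed

lemma Re_powr_prod:
  fixes a b :: complex and g :: real
  assumes "0 < Re a" "0 < Re b" "0 < Re (a * b)" "0 \<le> g" "g \<le> 1"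
  shows "Re (a * b) powr g \<le> Re (a powr of_real g * b powr of_real g)"
proof -
  have a0: "a \<noteq> 0" and b0: "b \<noteq> 0" using assms by auto
  define u where "u = Ln a + Ln b"
  have ab: "a * b = exp u" using a0 b0 by (simp add: u_def exp_add)
  have abg: "a powr of_real g * b powr of_real g = exp (of_real g * u)"
    using a0 b0 by (simp add: powr_def u_def exp_add[symmetric] algebra_simps)
  have i1: "\<bar>Im (Ln a)\<bar> < pi/2" using Re_Ln_pos_lt_imp assms(1) by blast
  have i2: "\<bar>Im (Ln b)\<bar> < pi/2" using Re_Ln_pos_lt_imp assms(2) by blast
  have iu: "\<bar>Im u\<bar> < pi" using i1 i2 by (simp add: u_def)
  have cpos: "0 < cos (Im u)" using assms(3) by (simp add: ab Re_exp zero_less_mult_iff)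
  have iu2: "\<bar>Im u\<bar> \<le> pi/2"
  proof (rule ccontr)
    assume "\<not> ?thesis"
    then have "pi/2 < \<bar>Im u\<bar>" by simp
    then have "cos \<bar>Im u\<bar> < 0" using iu by (intro cos_lt_zero_pi) auto
    then show False using cpos by simp
  qed
  have "Re (a * b) powr g = (exp (Re u) * cos (Im u)) powr g" by (simp add: ab Re_exp)
  also have "\<dots> = exp (Re u * g) * cos (Im u) powr g"
    using cpos by (simp add: powr_mult exp_powr_real)
  also have "\<dots> \<le> exp (Re u * g) * cos (g * Im u)"
    using cos_powr_le[OF assms(4,5) iu2 cpos] by simp
  also have "\<dots> = Re (a powr of_real g * b powr of_real g)"
    by (simp add: abg Re_exp mult.commute)
  finally show ?thesis .
qed

lemma gcoef_0[simp]: "gcoef g 0 = 1" by (simp add: gcoef_def)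

lemma gcoef_Suc: "gcoef g (Suc k) = gcoef g k * ((real k - g) / (real k + 1))"
proof -
  have "g * (g gchoose k) = of_nat k * (g gchoose k) + of_nat (Suc k) * (g gchoose (Suc k))"
    by (rule gbinomial_mult_1)
  then have e2: "(g gchoose Suc k) = (g - real k) * (g gchoose k) / (real k + 1)"
    by (simp add: field_simps)
  have "gcoef g (Suc k) = - ((-1)^k * (g gchoose Suc k))" by (simp add: gcoef_def)
  also have "\<dots> = (-1)^k * (g gchoose k) * ((real k - g) / (real k + 1))"
    unfolding e2 by (simp add: field_simps)
  finally show ?thesis by (simp add: gcoef_def)
qed

lemma gcoef_abs: assumes "0 \<le> g" "g \<le> 1" shows "\<bar>gcoef g k\<bar> \<le> 1"
proof (induction k)
  case (Suc k)
  have "\<bar>(real k - g) / (real k + 1)\<bar> \<le> 1" using assms by (simp add: abs_le_iff field_simps)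
  then have "\<bar>gcoef g k * ((real k - g) / (real k + 1))\<bar> \<le> 1 * 1"
    unfolding abs_mult using Suc by (intro mult_mono) auto
  then show ?case by (simp add: gcoef_Suc)
qed simp

lemma lcoef2_abs: assumes "0 \<le> g" "g \<le> 1" shows "\<bar>lcoef2 g m\<bar> \<le> 9/4"
proof -
  have "\<bar>\<Sum>k=0..m. (1/3) ^ k * gcoef g k * gcoef g (m - k)\<bar> \<le> (\<Sum>k=0..m. (1/3::real) ^ k)"
  proof -
    have "\<bar>\<Sum>k=0..m. (1/3) ^ k * gcoef g k * gcoef g (m - k)\<bar> \<le> (\<Sum>k=0..m. \<bar>(1/3) ^ k * gcoef g k * gcoef g (m - k)\<bar>)"
      by (rule sum_abs)
    also have "\<dots> \<le> (\<Sum>k=0..m. (1/3::real) ^ k)"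
    proof (rule sum_mono)
      fix k
      have "\<bar>gcoef g k\<bar> * \<bar>gcoef g (m - k)\<bar> \<le> 1 * 1"
        using gcoef_abs[OF assms] by (intro mult_mono) auto
      then show "\<bar>(1/3) ^ k * gcoef g k * gcoef g (m - k)\<bar> \<le> (1/3::real) ^ k"
        by (simp add: abs_mult mult.assoc mult_left_le)
    qed
    finally show ?thesis .
  qed
  also have "(\<Sum>k=0..m. (1/3::real) ^ k) = (1 - (1/3)^Suc m) / (1 - 1/3)"
    using sum_gp_strict[of "1/3::real" "Suc m"] by (simp add: atLeast0AtMost lessThan_Suc_atMost)
  also have "\<dots> \<le> 3/2" by simp
  finally have s: "\<bar>\<Sum>k=0..m. (1/3) ^ k * gcoef g k * gcoef g (m - k)\<bar> \<le> 3/2" .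
  have p: "(3/2::real) powr g \<le> 3/2"
    using powr_mono[of g 1 "3/2::real"] assms by simp
  have "\<bar>lcoef2 g m\<bar> = (3/2) powr g * \<bar>\<Sum>k=0..m. (1/3) ^ k * gcoef g k * gcoef g (m - k)\<bar>"
    by (simp add: lcoef2_def abs_mult)
  also have "\<dots> \<le> 3/2 * (3/2)" using p s by (intro mult_mono) auto
  finally show ?thesis by simp
qed

lemma of_real_gchoose: "(of_real a gchoose n :: complex) = of_real (a gchoose n)"
  by (simp add: gbinomial_prod_rev of_real_prod)

lemma lseries:
  fixes z :: complex
  assumes "norm z < 1" "0 \<le> g" "g \<le> 1"
  shows "(\<lambda>k. of_real (lcoef2 g k) * z ^ k) sums
           (of_real ((3/2) powr g) * ((1 - z/3) powr of_real g * (1 - z) powr of_real g))"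
proof -
  define A where "A = (\<lambda>i. of_real (gcoef g i) * z ^ i)"
  define B where "B = (\<lambda>i. of_real ((1/3) ^ i * gcoef g i) * z ^ i)"
  have nz3: "norm (-(z/3)) < 1" using assms(1) by (simp add: norm_divide)
  have sA: "A sums ((1 - z) powr of_real g)"
  proof -
    have "A n = (of_real g gchoose n) * (-z)^n" for n
      unfolding A_def gcoef_def of_real_mult of_real_gchoose power_minus[of z] of_real_power of_real_minus of_real_1
      by (simp only: mult_ac)
    then have "A = (\<lambda>n. (of_real g gchoose n) * (-z)^n)" by auto
    then show ?thesis using gen_binomial_complex[of "-z" "of_real g"] assms(1) by simp
  qed
  have sB: "B sums ((1 - z/3) powr of_real g)"
  proof -
    have "B n = (of_real g gchoose n) * (-(z/3))^n" for n
      unfolding B_def gcoef_def of_real_mult of_real_gchoose power_minus[of "z/3"] of_real_power of_real_minus of_real_1 power_divide of_real_divide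
      by (simp add: field_simps)
    then have "B = (\<lambda>n. (of_real g gchoose n) * (-(z/3))^n)" by auto
    then show ?thesis using gen_binomial_complex[OF nz3, of "of_real g"] by simp
  qed
  have nA: "summable (\<lambda>k. norm (A k))"
  proof (rule summable_comparison_test)
    show "\<exists>N. \<forall>n\<ge>N. norm (norm (A n)) \<le> norm z ^ n"
      using gcoef_abs[OF assms(2,3)]
      by (auto simp: A_def norm_mult norm_power intro!: mult_left_le_one_le)
    show "summable (\<lambda>n. norm z ^ n)" using assms(1) by simp
  qed
  have nB: "summable (\<lambda>k. norm (B k))"
  proof (rule summable_comparison_test)
    show "\<exists>N. \<forall>n\<ge>N. norm (norm (B n)) \<le> norm z ^ n"
    proof (intro exI allI impI)
      fix n
      have "\<bar>(1/3) ^ n * gcoef g n\<bar> \<le> 1 * 1"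
        unfolding abs_mult using gcoef_abs[OF assms(2,3), of n]
        by (intro mult_mono) (auto simp: power_le_one)
      then show "norm (norm (B n)) \<le> norm z ^ n"
        by (auto simp: B_def norm_mult norm_power intro!: mult_left_le_one_le)
    qed
    show "summable (\<lambda>n. norm z ^ n)" using assms(1) by simp
  qed
  have "(\<lambda>k. \<Sum>i\<le>k. B i * A (k - i)) sums (suminf B * suminf A)"
    by (rule Cauchy_product_sums[OF nB nA])
  moreover have "suminf B * suminf A = (1 - z/3) powr of_real g * (1 - z) powr of_real g"
    using sA sB by (simp add: sums_iff)
  moreover have "(\<Sum>i\<le>k. B i * A (k - i)) =
      of_real (\<Sum>i=0..k. (1/3) ^ i * gcoef g i * gcoef g (k - i)) * z ^ k" for k
  proof -
    have "(\<Sum>i\<le>k. B i * A (k - i)) = (\<Sum>i\<le>k. of_real ((1/3) ^ i * gcoef g i * gcoef g (k - i)) * z ^ k)"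
    proof (rule sum.cong[OF refl])
      fix i assume "i \<in> {..k}"
      then have "z ^ i * z ^ (k - i) = z ^ k" by (simp add: power_add[symmetric])
      then show "B i * A (k - i) = of_real ((1/3) ^ i * gcoef g i * gcoef g (k - i)) * z ^ k"
        by (simp add: A_def B_def mult_ac)
    qed
    then show ?thesis by (simp add: sum_distrib_right atLeast0AtMost)
  qed
  ultimately have "(\<lambda>k. of_real (\<Sum>i=0..k. (1/3) ^ i * gcoef g i * gcoef g (k - i)) * z ^ k)
      sums ((1 - z/3) powr of_real g * (1 - z) powr of_real g)" by simp
  from sums_mult[OF this, of "of_real ((3/2) powr g)"] show ?thesis
    by (simp add: lcoef2_def mult_ac)
qed

lemma root_sum:
  fixes d :: int and M :: nat
  assumes "0 < M" "\<bar>d\<bar> < int M"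
  shows "(\<Sum>j<M. cis (2 * pi * real j * real_of_int d / real M)) = (if d = 0 then of_nat M else 0)"
proof (cases "d = 0")
  case True then show ?thesis by simp
next
  case False
  define x where "x = cis (2 * pi * real_of_int d / real M)"
  have xj: "cis (2 * pi * real j * real_of_int d / real M) = x ^ j" for j
    unfolding x_def Complex.DeMoivre by (rule arg_cong[where f=cis]) (simp add: field_simps)
  have xM: "x ^ M = 1"
  proof -
    have "x ^ M = cis (2 * pi * real_of_int d)" using assms(1) by (simp add: x_def Complex.DeMoivre)
    also have "\<dots> = 1" using cis_multiple_2pi[of "real_of_int d"] by simp
    finally show ?thesis .
  qed
  have x1: "x \<noteq> 1"
  proof
    assume "x = 1"
    then have "exp (\<i> * complex_of_real (2 * pi * real_of_int d / real M)) = 1"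
      by (simp add: x_def cis_conv_exp)
    then obtain n :: int where n: "2 * pi * real_of_int d / real M = of_int (2 * n) * pi"
      by (auto simp: exp_eq_1)
    then have "real_of_int d = real_of_int n * real M" using assms(1) by (simp add: field_simps)
    then have dn: "d = n * int M" by (metis of_int_eq_iff of_int_mult of_int_of_nat_eq)
    show False
    proof (cases "n = 0")
      case True then show False using dn False by simp
    next
      case nz: False
      then have "\<bar>d\<bar> = \<bar>n\<bar> * int M" by (simp add: dn abs_mult)
      also have "\<dots> \<ge> 1 * int M" using nz by (intro mult_right_mono) auto
      finally show False using assms(2) by simp
    qed
  qed
  have "(\<Sum>j<M. cis (2 * pi * real j * real_of_int d / real M)) = (\<Sum>j<M. x ^ j)"
    by (simp add: xj)
  also have "\<dots> = 0" using x1 xM by (simp add: sum_gp_strict)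
  finally show ?thesis using False by simp
qed

lemma triple_prod:
  fixes a b c :: "nat \<Rightarrow> complex"
  shows "(\<Sum>k\<in>A. a k) * (\<Sum>m\<in>B. b m) * (\<Sum>n\<in>C. c n) = (\<Sum>k\<in>A. \<Sum>m\<in>B. \<Sum>n\<in>C. a k * b m * c n)"
proof -
  have "(\<Sum>k\<in>A. a k) * (\<Sum>m\<in>B. b m) * (\<Sum>n\<in>C. c n) = (\<Sum>k\<in>A. a k * ((\<Sum>m\<in>B. b m) * (\<Sum>n\<in>C. c n)))"
    by (simp add: sum_distrib_right mult.assoc)
  also have "\<dots> = (\<Sum>k\<in>A. \<Sum>m\<in>B. \<Sum>n\<in>C. a k * b m * c n)"
    unfolding sum_product by (simp only: sum_distrib_left mult.assoc)
  finally show ?thesis .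
qed

lemma cis_triple:
  "cis (2*pi*real j*real k/real M) * cis (2*pi*real j*real m/real M) * cnj (cis (2*pi*real j*real n/real M))
   = cis (2 * pi * real j * real_of_int (int k + int m - int n) / real M)"
  by (cases "M = 0") (simp_all add: cis_cnj cis_mult, rule arg_cong[where f=cis], simp add: field_simps)

lemma reindex3:
  fixes F :: "nat \<Rightarrow> nat \<Rightarrow> nat \<Rightarrow> complex"
  assumes "N \<le> K"
  shows "(\<Sum>k\<le>K. \<Sum>m\<le>N. \<Sum>n\<le>N. if k + m = n then F k m n else 0) = (\<Sum>n\<le>N. \<Sum>k\<le>n. F k (n - k) n)"
proof -
  have "(\<Sum>k\<le>K. \<Sum>m\<le>N. \<Sum>n\<le>N. if k + m = n then F k m n else 0)
      = (\<Sum>n\<le>N. \<Sum>k\<le>K. \<Sum>m\<le>N. if k + m = n then F k m n else 0)"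
  proof -
    have "(\<Sum>k\<le>K. \<Sum>m\<le>N. \<Sum>n\<le>N. if k + m = n then F k m n else 0)
        = (\<Sum>k\<le>K. \<Sum>n\<le>N. \<Sum>m\<le>N. if k + m = n then F k m n else 0)"
      by (rule sum.cong[OF refl], rule sum.swap)
    also have "\<dots> = (\<Sum>n\<le>N. \<Sum>k\<le>K. \<Sum>m\<le>N. if k + m = n then F k m n else 0)"
      by (rule sum.swap)
    finally show ?thesis .
  qed
  also have "\<dots> = (\<Sum>n\<le>N. \<Sum>k\<le>K. if k \<le> n then F k (n - k) n else 0)"
  proof (intro sum.cong refl)
    fix n k assume n: "n \<in> {..N}"
    have "(\<Sum>m\<le>N. if k + m = n then F k m n else 0) = (\<Sum>m\<le>N. if m = n - k \<and> k \<le> n then F k (n - k) n else 0)"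
      by (intro sum.cong refl) auto
    also have "\<dots> = (if k \<le> n then F k (n - k) n else 0)"
      using n by (cases "k \<le> n") (auto simp: sum.delta')
    finally show "(\<Sum>m\<le>N. if k + m = n then F k m n else 0) = (if k \<le> n then F k (n - k) n else 0)" .
  qed
  also have "\<dots> = (\<Sum>n\<le>N. \<Sum>k\<le>n. F k (n - k) n)"
  proof (rule sum.cong[OF refl])
    fix n assume n: "n \<in> {..N}"
    have se: "{x\<in>{..K}. x \<le> n} = {..n}" using n assms by auto
    have "(\<Sum>k\<le>K. if k \<le> n then F k (n - k) n else 0) = (\<Sum>k\<in>{x\<in>{..K}. x \<le> n}. F k (n - k) n)"
      by (rule sum.inter_filter[OF finite_atMost, symmetric])
    then show "(\<Sum>k\<le>K. if k \<le> n then F k (n - k) n else 0) = (\<Sum>k\<le>n. F k (n - k) n)" unfolding se .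
  qed
  finally show ?thesis .
qed

lemma dft:
  fixes h y :: "nat \<Rightarrow> complex"
  assumes "N \<le> K" "K + N < M"
  shows "(\<Sum>j<M. (\<Sum>k\<le>K. h k * cis (2*pi*real j*real k/real M))
                 * (\<Sum>m\<le>N. y m * cis (2*pi*real j*real m/real M))
                 * cnj (\<Sum>n\<le>N. y n * cis (2*pi*real j*real n/real M)))
         = of_nat M * (\<Sum>n\<le>N. \<Sum>k\<le>n. h k * y (n - k) * cnj (y n))"
proof -
  have M0: "0 < M" using assms by simp
  have "(\<Sum>j<M. (\<Sum>k\<le>K. h k * cis (2*pi*real j*real k/real M))
                 * (\<Sum>m\<le>N. y m * cis (2*pi*real j*real m/real M))
                 * cnj (\<Sum>n\<le>N. y n * cis (2*pi*real j*real n/real M)))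
      = (\<Sum>j<M. \<Sum>k\<le>K. \<Sum>m\<le>N. \<Sum>n\<le>N. h k * y m * cnj (y n) *
            cis (2 * pi * real j * real_of_int (int k + int m - int n) / real M))"
  proof (intro sum.cong refl)
    fix j
    show "(\<Sum>k\<le>K. h k * cis (2*pi*real j*real k/real M))
                 * (\<Sum>m\<le>N. y m * cis (2*pi*real j*real m/real M))
                 * cnj (\<Sum>n\<le>N. y n * cis (2*pi*real j*real n/real M))
         = (\<Sum>k\<le>K. \<Sum>m\<le>N. \<Sum>n\<le>N. h k * y m * cnj (y n) *
            cis (2 * pi * real j * real_of_int (int k + int m - int n) / real M))"
    proof -
      have "(\<Sum>k\<le>K. h k * cis (2*pi*real j*real k/real M))
                 * (\<Sum>m\<le>N. y m * cis (2*pi*real j*real m/real M))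
                 * cnj (\<Sum>n\<le>N. y n * cis (2*pi*real j*real n/real M))
          = (\<Sum>k\<le>K. \<Sum>m\<le>N. \<Sum>n\<le>N. (h k * cis (2*pi*real j*real k/real M))
                 * (y m * cis (2*pi*real j*real m/real M))
                 * cnj (y n * cis (2*pi*real j*real n/real M)))"
        unfolding cnj_sum by (rule triple_prod)
      also have "\<dots> = (\<Sum>k\<le>K. \<Sum>m\<le>N. \<Sum>n\<le>N. h k * y m * cnj (y n) *
            cis (2 * pi * real j * real_of_int (int k + int m - int n) / real M))"
        unfolding cis_triple[symmetric] by (intro sum.cong refl) (simp add: mult_ac)
      finally show ?thesis .
    qed
  qed
  also have "\<dots> = (\<Sum>k\<le>K. \<Sum>m\<le>N. \<Sum>n\<le>N. \<Sum>j<M. h k * y m * cnj (y n) *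
            cis (2 * pi * real j * real_of_int (int k + int m - int n) / real M))"
  proof -
    have "(\<Sum>j<M. \<Sum>k\<le>K. \<Sum>m\<le>N. \<Sum>n\<le>N. h k * y m * cnj (y n) *
            cis (2 * pi * real j * real_of_int (int k + int m - int n) / real M))
       = (\<Sum>k\<le>K. \<Sum>j<M. \<Sum>m\<le>N. \<Sum>n\<le>N. h k * y m * cnj (y n) *
            cis (2 * pi * real j * real_of_int (int k + int m - int n) / real M))"
      by (rule sum.swap)
    also have "\<dots> = (\<Sum>k\<le>K. \<Sum>m\<le>N. \<Sum>j<M. \<Sum>n\<le>N. h k * y m * cnj (y n) *
            cis (2 * pi * real j * real_of_int (int k + int m - int n) / real M))"
      by (rule sum.cong[OF refl], rule sum.swap)
    also have "\<dots> = (\<Sum>k\<le>K. \<Sum>m\<le>N. \<Sum>n\<le>N. \<Sum>j<M. h k * y m * cnj (y n) *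
            cis (2 * pi * real j * real_of_int (int k + int m - int n) / real M))"
      by (rule sum.cong[OF refl], rule sum.cong[OF refl], rule sum.swap)
    finally show ?thesis .
  qed
  also have "\<dots> = (\<Sum>k\<le>K. \<Sum>m\<le>N. \<Sum>n\<le>N. if k + m = n then of_nat M * (h k * y m * cnj (y n)) else 0)"
  proof (intro sum.cong refl)
    fix k m n assume k: "k \<in> {..K}" and m: "m \<in> {..N}" and n: "n \<in> {..N}"
    have d: "\<bar>int k + int m - int n\<bar> < int M" using k m n assms by auto
    have "(\<Sum>j<M. h k * y m * cnj (y n) * cis (2 * pi * real j * real_of_int (int k + int m - int n) / real M))
        = h k * y m * cnj (y n) * (\<Sum>j<M. cis (2 * pi * real j * real_of_int (int k + int m - int n) / real M))"
      by (simp add: sum_distrib_left)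
    also have "\<dots> = (if k + m = n then of_nat M * (h k * y m * cnj (y n)) else 0)"
      using root_sum[OF M0 d] by auto
    finally show "(\<Sum>j<M. h k * y m * cnj (y n) * cis (2 * pi * real j * real_of_int (int k + int m - int n) / real M))
        = (if k + m = n then of_nat M * (h k * y m * cnj (y n)) else 0)" .
  qed
  also have "\<dots> = (\<Sum>n\<le>N. \<Sum>k\<le>n. of_nat M * (h k * y (n - k) * cnj (y n)))"
    by (rule reindex3[OF assms(1)])
  also have "\<dots> = of_nat M * (\<Sum>n\<le>N. \<Sum>k\<le>n. h k * y (n - k) * cnj (y n))"
    by (simp add: sum_distrib_left)
  finally show ?thesis .
qed

lemma Re_quad_bound:
  fixes z :: complex and s :: real
  assumes "norm z = s" "s < 1"
  shows "(1 - s/3) * (1 - s) \<le> Re ((1 - z/3) * (1 - z))"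
proof -
  have n: "(Re z)^2 + (Im z)^2 = s^2" using assms(1)
    by (simp add: cmod_def) (metis cmod_power2 assms(1) power2_eq_square)
  have x1: "Re z \<le> s" using assms(1) complex_Re_le_cmod by blast
  have x2: "- s \<le> Re z" using assms(1) abs_Re_le_cmod[of z] by linarith
  define Q where "Q = (s - Re z) * (2 - s - Re z)"
  have Q0: "0 \<le> Q" unfolding Q_def using x1 x2 assms(2) by (intro mult_nonneg_nonneg) auto
  have r: "Re ((1 - z/3) * (1 - z)) = 1 - 4 * Re z / 3 + ((Re z)^2 - (Im z)^2)/3"
    by (simp add: power2_eq_square field_simps)
  have "Re ((1 - z/3) * (1 - z)) - (1 - s/3) * (1 - s) = (2 * Q + (s^2 - ((Re z)^2 + (Im z)^2))) / 3"
    unfolding r Q_def by (simp add: field_simps power2_eq_square)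
  then have "Re ((1 - z/3) * (1 - z)) - (1 - s/3) * (1 - s) = (2 * Q) / 3" unfolding n by simp
  then show ?thesis using Q0 by linarith
qed

lemma Re_partial:
  fixes z :: complex and s g :: real
  assumes "0 \<le> g" "g \<le> 1" "norm z = s" "s < 1"
  shows "((1-s) + (1-s)^2/2) powr g - 9/4 * s^n / (1 - s) \<le> Re (\<Sum>k<n. of_real (lcoef2 g k) * z^k)"
proof -
  have s0: "0 \<le> s" using assms(3) by auto
  have nz: "norm z < 1" using assms by simp
  define S where "S = of_real ((3/2) powr g) * ((1 - z/3) powr of_real g * (1 - z) powr of_real g)"
  have sm: "(\<lambda>k. of_real (lcoef2 g k) * z ^ k) sums S" unfolding S_def by (rule lseries[OF nz assms(1,2)])
  have tail: "(\<lambda>i. of_real (lcoef2 g (i + n)) * z ^ (i + n)) sums (S - (\<Sum>k<n. of_real (lcoef2 g k) * z^k))"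
    by (rule sums_split_initial_segment[OF sm])
  have gs: "(\<lambda>i. 9/4 * s^n * s^i) sums (9/4 * s^n * (1 / (1 - s)))"
    by (rule sums_mult) (rule geometric_sums, use s0 assms in auto)
  have "norm (S - (\<Sum>k<n. of_real (lcoef2 g k) * z^k)) \<le> (\<Sum>i. 9/4 * s^n * s^i)"
    unfolding sums_unique[OF tail]
  proof (rule norm_suminf_le)
    fix i
    have "norm (of_real (lcoef2 g (i + n)) * z ^ (i + n)) = \<bar>lcoef2 g (i+n)\<bar> * s^(i+n)"
      by (simp add: norm_mult norm_power assms(3))
    also have "\<dots> \<le> 9/4 * s^(i+n)" using lcoef2_abs[OF assms(1,2)] s0
      by (intro mult_right_mono) auto
    finally show "norm (of_real (lcoef2 g (i + n)) * z ^ (i + n)) \<le> 9/4 * s^n * s^i"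
      by (simp add: power_add mult_ac)
    show "summable (\<lambda>i. 9/4 * s^n * s^i)" using gs by (rule sums_summable)
  qed
  also have "\<dots> = 9/4 * s^n / (1 - s)" using sums_unique[OF gs] by simp
  finally have d: "norm (S - (\<Sum>k<n. of_real (lcoef2 g k) * z^k)) \<le> 9/4 * s^n / (1 - s)" .
  have ReS: "((1-s) + (1-s)^2/2) powr g \<le> Re S"
  proof -
    have q: "(1 - s/3) * (1 - s) \<le> Re ((1 - z/3) * (1 - z))" by (rule Re_quad_bound[OF assms(3,4)])
    have pa: "0 < Re (1 - z/3)" using complex_Re_le_cmod[of z] nz by simp
    have pb: "0 < Re (1 - z)" using complex_Re_le_cmod[of z] nz by simp
    have pq: "0 < (1 - s/3) * (1 - s)" using assms s0 by simp
    have "(1-s) + (1-s)^2/2 = (3/2) * ((1 - s/3) * (1 - s))"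
      by (simp add: field_simps power2_eq_square)
    then have "((1-s) + (1-s)^2/2) powr g = ((3/2) * ((1 - s/3) * (1 - s))) powr g"
      by (rule arg_cong)
    also have "\<dots> = (3/2) powr g * ((1 - s/3) * (1 - s)) powr g"
      using pq by (intro powr_mult)
    also have "\<dots> \<le> (3/2) powr g * Re ((1 - z/3) * (1 - z)) powr g"
      using q pq assms(1) by (intro mult_left_mono powr_mono2) auto
    also have "\<dots> \<le> (3/2) powr g * Re ((1 - z/3) powr of_real g * (1 - z) powr of_real g)"
      using Re_powr_prod[OF pa pb _ assms(1,2)] q pq by (intro mult_left_mono) auto
    also have "\<dots> = Re S" by (simp add: S_def)
    finally show ?thesis .
  qed
  have "Re S - Re (\<Sum>k<n. of_real (lcoef2 g k) * z^k) \<le> 9/4 * s^n / (1 - s)"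
    using d abs_Re_le_cmod[of "S - (\<Sum>k<n. of_real (lcoef2 g k) * z^k)"] by simp
  then show ?thesis using ReS by simp
qed

lemma core_K:
  fixes g s :: real and y :: "nat \<Rightarrow> complex" and N K :: nat
  assumes "0 \<le> g" "g \<le> 1" "0 < s" "s < 1" "N \<le> K"
  shows "(((1-s)+(1-s)^2/2) powr g - 9/4 * s^(Suc K) / (1 - s)) * (\<Sum>n\<le>N. (cmod (y n))^2)
     \<le> Re (\<Sum>n\<le>N. \<Sum>k\<le>n. of_real (s^k * lcoef2 g k) * y (n-k) * cnj (y n))"
proof -
  define M where "M = K + N + 1"
  have MKN: "K + N < M" and M0: "0 < M" by (auto simp: M_def)
  define h where "h = (\<lambda>k. complex_of_real (s^k * lcoef2 g k))"
  define Yj where "Yj = (\<lambda>j::nat. \<Sum>m\<le>N. y m * cis (2*pi*real j*real m/real M))"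
  define Pj where "Pj = (\<lambda>j::nat. \<Sum>k\<le>K. h k * cis (2*pi*real j*real k/real M))"
  define ep where "ep = ((1-s)+(1-s)^2/2) powr g - 9/4 * s^(Suc K) / (1 - s)"
  define Main where "Main = (\<Sum>n\<le>N. \<Sum>k\<le>n. h k * y (n-k) * cnj (y n))"
  have d1: "(\<Sum>j<M. Pj j * Yj j * cnj (Yj j)) = of_nat M * Main"
    unfolding Pj_def Yj_def Main_def by (rule dft[OF assms(5) MKN])
  have d2: "(\<Sum>j<M. (\<Sum>k\<le>K. (if k = 0 then 1 else 0) * cis (2*pi*real j*real k/real M)) * Yj j * cnj (Yj j))
      = of_nat M * (\<Sum>n\<le>N. \<Sum>k\<le>n. (if k = 0 then 1 else 0) * y (n-k) * cnj (y n))"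
    unfolding Yj_def by (rule dft[OF assms(5) MKN])
  have "(\<Sum>k\<le>K. (if k = 0 then 1 else 0) * cis (2*pi*real j*real k/real M)) = 1" for j
    by (simp add: if_distrib[where f="\<lambda>x. x * _"] sum.delta cong: if_cong)
  moreover have "(\<Sum>k\<le>n. (if k = 0 then 1 else 0) * y (n-k) * cnj (y n)) = y n * cnj (y n)" for n
    by (simp add: if_distrib[where f="\<lambda>x. x * _"] sum.delta cong: if_cong)
  ultimately have d2': "(\<Sum>j<M. Yj j * cnj (Yj j)) = of_nat M * (\<Sum>n\<le>N. y n * cnj (y n))"
    using d2 by simp
  have par: "(\<Sum>j<M. (cmod (Yj j))^2) = real M * (\<Sum>n\<le>N. (cmod (y n))^2)"
  proof -
    have "complex_of_real (\<Sum>j<M. (cmod (Yj j))^2) = (\<Sum>j<M. Yj j * cnj (Yj j))"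
      by (simp only: of_real_sum complex_norm_square)
    also have "\<dots> = of_nat M * (\<Sum>n\<le>N. y n * cnj (y n))" by (rule d2')
    also have "\<dots> = complex_of_real (real M * (\<Sum>n\<le>N. (cmod (y n))^2))"
      by (simp only: of_real_mult of_real_of_nat_eq of_real_sum complex_norm_square)
    finally have "complex_of_real (\<Sum>j<M. (cmod (Yj j))^2) = complex_of_real (real M * (\<Sum>n\<le>N. (cmod (y n))^2))" .
    then show ?thesis by (simp only: of_real_eq_iff)
  qed
  have RP: "ep \<le> Re (Pj j)" for j
  proof -
    define z where "z = complex_of_real s * cis (2*pi*real j/real M)"
    have nz: "norm z = s" using assms by (simp add: z_def norm_mult)
    have "Pj j = (\<Sum>k<Suc K. of_real (lcoef2 g k) * z^k)"
      unfolding Pj_def lessThan_Suc_atMost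
    proof (intro sum.cong refl)
      fix k
      have "cis (2*pi*real j/real M) ^ k = cis (2*pi*real j*real k/real M)"
        unfolding Complex.DeMoivre by (rule arg_cong[where f=cis]) (simp add: field_simps)
      then show "h k * cis (2*pi*real j*real k/real M) = of_real (lcoef2 g k) * z^k"
        by (simp add: h_def z_def power_mult_distrib mult_ac)
    qed
    then show ?thesis unfolding ep_def using Re_partial[OF assms(1,2) nz assms(4), of "Suc K"] by simp
  qed
  have "Re (of_nat M * Main) = (\<Sum>j<M. Re (Pj j) * (cmod (Yj j))^2)"
  proof -
    have "Re (of_nat M * Main) = (\<Sum>j<M. Re (Pj j * (Yj j * cnj (Yj j))))"
      unfolding d1[symmetric] by (simp add: mult.assoc Re_sum)
    also have "\<dots> = (\<Sum>j<M. Re (Pj j) * (cmod (Yj j))^2)"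
      by (intro sum.cong refl) (simp add: complex_norm_square[symmetric])
    finally show ?thesis .
  qed
  also have "\<dots> \<ge> (\<Sum>j<M. ep * (cmod (Yj j))^2)"
    by (intro sum_mono mult_right_mono RP) auto
  finally have "real M * (ep * (\<Sum>n\<le>N. (cmod (y n))^2)) \<le> real M * Re Main"
    by (simp add: sum_distrib_left[symmetric] par mult_ac)
  then have "ep * (\<Sum>n\<le>N. (cmod (y n))^2) \<le> Re Main" using M0 by simp
  then show ?thesis by (simp add: ep_def Main_def h_def)
qed

lemma core:
  fixes g s :: real and y :: "nat \<Rightarrow> complex" and N :: nat
  assumes "0 \<le> g" "g \<le> 1" "0 < s" "s < 1"
  shows "((1-s)+(1-s)^2/2) powr g * (\<Sum>n\<le>N. (cmod (y n))^2)
     \<le> Re (\<Sum>n\<le>N. \<Sum>k\<le>n. of_real (s^k * lcoef2 g k) * y (n-k) * cnj (y n))"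
proof (rule LIMSEQ_le_const2)
  let ?Y = "\<Sum>n\<le>N. (cmod (y n))^2"
  show "(\<lambda>K. (((1-s)+(1-s)^2/2) powr g - 9/4 * s^(Suc K) / (1 - s)) * ?Y)
      \<longlonglongrightarrow> ((1-s)+(1-s)^2/2) powr g * ?Y"
  proof -
    have "(\<lambda>K. s^(Suc K)) \<longlonglongrightarrow> 0"
      using LIMSEQ_Suc[OF LIMSEQ_power_zero[of s]] assms by simp
    then have "(\<lambda>K. (((1-s)+(1-s)^2/2) powr g - 9/4 * s^(Suc K) / (1 - s)) * ?Y)
      \<longlonglongrightarrow> (((1-s)+(1-s)^2/2) powr g - 9/4 * 0 / (1 - s)) * ?Y"
      using assms by (intro tendsto_intros) auto
    then show ?thesis by simp
  qed
  show "\<exists>N0. \<forall>K\<ge>N0. (((1-s)+(1-s)^2/2) powr g - 9/4 * s^(Suc K) / (1 - s)) * ?Y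
     \<le> Re (\<Sum>n\<le>N. \<Sum>k\<le>n. of_real (s^k * lcoef2 g k) * y (n-k) * cnj (y n))"
    using core_K[OF assms] by blast
qed

lemma shifted:
  fixes g r Lq :: real and y :: "nat \<Rightarrow> complex" and N :: nat
  assumes "0 \<le> g" "g \<le> 1" "0 < r" "r \<le> q" "q \<le> 1" "Lq = ((1-q)+(1-q)^2/2) powr g"
  shows "0 \<le> Re (\<Sum>n\<le>N. \<Sum>k\<le>n. of_real (r^k * lcoef2 g k - (if k = 0 then Lq else 0)) * y (n-k) * cnj (y n))"
proof -
  define G where "G = (\<lambda>t::real. Re (\<Sum>n\<le>N. \<Sum>k\<le>n. of_real ((r*t)^k * lcoef2 g k - (if k = 0 then Lq else 0)) * y (n-k) * cnj (y n)))"
  have split: "G t = Re (\<Sum>n\<le>N. \<Sum>k\<le>n. of_real ((r*t)^k * lcoef2 g k) * y (n-k) * cnj (y n))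
                     - Lq * (\<Sum>n\<le>N. (cmod (y n))^2)" for t
  proof -
    have "(\<Sum>n\<le>N. \<Sum>k\<le>n. of_real ((r*t)^k * lcoef2 g k - (if k = 0 then Lq else 0)) * y (n-k) * cnj (y n))
      = (\<Sum>n\<le>N. \<Sum>k\<le>n. of_real ((r*t)^k * lcoef2 g k) * y (n-k) * cnj (y n))
        - (\<Sum>n\<le>N. \<Sum>k\<le>n. of_real (if k = 0 then Lq else 0) * y (n-k) * cnj (y n))"
      by (simp add: sum_subtractf[symmetric] algebra_simps del: of_real_power)
    moreover have "(\<Sum>n\<le>N. \<Sum>k\<le>n. of_real (if k = 0 then Lq else 0) * y (n-k) * cnj (y n))
        = of_real (Lq * (\<Sum>n\<le>N. (cmod (y n))^2))"
    proof -
      have "(\<Sum>n\<le>N. \<Sum>k\<le>n. of_real (if k = 0 then Lq else 0) * y (n-k) * cnj (y n))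
          = (\<Sum>n\<le>N. of_real Lq * (y n * cnj (y n)))"
      proof (intro sum.cong refl)
        fix n
        have "(\<Sum>k\<le>n. of_real (if k = 0 then Lq else 0) * y (n-k) * cnj (y n))
            = (\<Sum>k\<le>n. if k = 0 then of_real Lq * y (n-k) * cnj (y n) else 0)"
          by (intro sum.cong refl) auto
        also have "\<dots> = of_real Lq * (y n * cnj (y n))" by (simp add: sum.delta mult.assoc)
        finally show "(\<Sum>k\<le>n. of_real (if k = 0 then Lq else 0) * y (n-k) * cnj (y n)) = of_real Lq * (y n * cnj (y n))" .
      qed
      also have "\<dots> = of_real (Lq * (\<Sum>n\<le>N. (cmod (y n))^2))"
        by (simp only: of_real_mult of_real_sum complex_norm_square sum_distrib_left)
      finally show ?thesis .
    qed
    ultimately show ?thesis unfolding G_def by simp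
  qed
  have Gpos: "0 \<le> G t" if t: "0 < t" "t < 1" for t
  proof -
    define s where "s = r * t"
    have rt: "r * t < r" using t assms(3) by simp
    have s: "0 < s" "s < 1" "s \<le> q" unfolding s_def
      using t assms(3,4,5) rt by (simp, linarith, linarith)
    have "Lq \<le> ((1-s)+(1-s)^2/2) powr g"
      unfolding assms(6)
    proof (rule powr_mono2)
      show "0 \<le> (1-q)+(1-q)^2/2" using assms by simp
      show "(1-q)+(1-q)^2/2 \<le> (1-s)+(1-s)^2/2"
        using s assms by (intro add_mono divide_right_mono power_mono) auto
    qed (use assms in auto)
    then have "Lq * (\<Sum>n\<le>N. (cmod (y n))^2) \<le> ((1-s)+(1-s)^2/2) powr g * (\<Sum>n\<le>N. (cmod (y n))^2)"
      by (intro mult_right_mono sum_nonneg) auto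
    also have "\<dots> \<le> Re (\<Sum>n\<le>N. \<Sum>k\<le>n. of_real (s^k * lcoef2 g k) * y (n-k) * cnj (y n))"
      by (rule core[OF assms(1,2) s(1,2)])
    finally show ?thesis unfolding split s_def by simp
  qed
  have lim: "(\<lambda>m. G (1 - inverse (real (Suc (Suc m))))) \<longlonglongrightarrow> G 1"
  proof -
    have "(\<lambda>m. inverse (real (Suc (Suc m)))) \<longlonglongrightarrow> 0"
      by (rule LIMSEQ_Suc[OF LIMSEQ_inverse_real_of_nat])
    then have "(\<lambda>m. 1 - inverse (real (Suc (Suc m)))) \<longlonglongrightarrow> 1 - 0"
      by (intro tendsto_intros)
    then have l1: "(\<lambda>m. 1 - inverse (real (Suc (Suc m)))) \<longlonglongrightarrow> 1" by simp
    show ?thesis unfolding G_def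
      by (intro tendsto_intros l1)
  qed
  have "0 \<le> G 1"
  proof (rule LIMSEQ_le_const[OF lim])
    show "\<exists>N0. \<forall>m\<ge>N0. 0 \<le> G (1 - inverse (real (Suc (Suc m))))"
    proof (intro exI[of _ 0] allI impI Gpos)
      fix m :: nat
      have "inverse (real (Suc (Suc m))) \<le> 1/2" by (simp add: field_simps)
      then show "0 < 1 - inverse (real (Suc (Suc m)))" by linarith
      show "1 - inverse (real (Suc (Suc m))) < 1" by simp
    qed
  qed
  then show ?thesis by (simp add: G_def)
qed

theorem lemma3p7:
  fixes \<gamma> lam \<tau> \<eta> \<rho> u :: real and N :: nat and v :: "nat \<Rightarrow> complex"
  assumes "0 < \<gamma>" "\<gamma> < 1" "0 \<le> lam" "0 < \<tau>" "0 \<le> \<rho> * u" "1 \<le> N"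
  shows "0 \<le> Re (\<Sum>n=0..N. (\<Sum>k=0..n. complex_of_real (lmod2 \<gamma> lam \<tau> \<rho> u k)
            * exp (- \<i> * complex_of_real (\<eta> * u * real k * \<tau>)) * v (n - k)) * cnj (v n))"
proof -
  define r where "r = exp (- (lam + \<rho> * u) * \<tau>)"
  define q where "q = exp (- lam * \<tau>)"
  define Lq where "Lq = ((1-q)+(1-q)^2/2) powr \<gamma>"
  define \<phi> where "\<phi> = \<eta> * u * \<tau>"
  define y where "y = (\<lambda>n. v n * cis (\<phi> * real n))"
  have r0: "0 < r" by (simp add: r_def)
  have pu: "0 \<le> (\<rho> * u) * \<tau>" using assms(4,5) by simp
  have rq: "r \<le> q" unfolding r_def q_def exp_le_cancel_iff using pu by (simp add: algebra_simps)
  have q1: "q \<le> 1" unfolding q_def using assms by simp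
  have coef: "lmod2 \<gamma> lam \<tau> \<rho> u k = r^k * lcoef2 \<gamma> k - (if k = 0 then Lq else 0)" for k
  proof (cases "k = 0")
    case True
    have "(\<Sum>l=1..(2::nat). (1 / real l) * (1 - exp (- lam * \<tau>)) ^ l) = (1-q)+(1-q)^2/2"
      by (simp add: q_def numeral_2_eq_2)
    then show ?thesis using True by (simp add: lmod2_def Lq_def)
  next
    case False
    have "exp (- (lam + \<rho> * u) * real k * \<tau>) = r ^ k"
      unfolding r_def exp_of_nat_mult[symmetric] by (simp add: mult_ac)
    then show ?thesis using False by (simp add: lmod2_def)
  qed
  have trm: "complex_of_real (lmod2 \<gamma> lam \<tau> \<rho> u k) * exp (- \<i> * complex_of_real (\<eta> * u * real k * \<tau>)) * v (n - k) * cnj (v n)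
      = of_real (r^k * lcoef2 \<gamma> k - (if k = 0 then Lq else 0)) * y (n-k) * cnj (y n)" if "k \<le> n" for n k
  proof -
    have e: "exp (- \<i> * complex_of_real (\<eta> * u * real k * \<tau>)) = cis (\<phi> * real (n - k)) * cnj (cis (\<phi> * real n))"
    proof -
      have 1: "cis (\<phi> * real (n - k)) * cnj (cis (\<phi> * real n)) = cis (- (\<eta> * u * real k * \<tau>))"
        unfolding cis_cnj cis_mult using that
        by (intro arg_cong[where f=cis]) (simp add: \<phi>_def of_nat_diff algebra_simps)
      have 2: "cis (- (\<eta> * u * real k * \<tau>)) = exp (- \<i> * complex_of_real (\<eta> * u * real k * \<tau>))"
        unfolding cis_conv_exp by simp
      show ?thesis using 1 2 by simp
    qed
    show ?thesis unfolding coef e y_def by (simp add: mult_ac)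
  qed
  have "(\<Sum>n=0..N. (\<Sum>k=0..n. complex_of_real (lmod2 \<gamma> lam \<tau> \<rho> u k)
            * exp (- \<i> * complex_of_real (\<eta> * u * real k * \<tau>)) * v (n - k)) * cnj (v n))
      = (\<Sum>n\<le>N. \<Sum>k\<le>n. of_real (r^k * lcoef2 \<gamma> k - (if k = 0 then Lq else 0)) * y (n-k) * cnj (y n))"
    unfolding atLeast0AtMost sum_distrib_right by (intro sum.cong refl trm) auto
  moreover have "0 \<le> Re (\<Sum>n\<le>N. \<Sum>k\<le>n. of_real (r^k * lcoef2 \<gamma> k - (if k = 0 then Lq else 0)) * y (n-k) * cnj (y n))"
    by (rule shifted[OF _ _ r0 rq q1 Lq_def]) (use assms in auto)
  ultimately show ?thesis by simp
qed

end
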